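(* Let $G$ be a finite group and let $C$ be an $\mathtt{N}$-class of the first type. Assume that there exist a prime $p$, an integer $r\geq 2$ and an integer $s$ with $0\le s\le r-2$ such that $|\hat{C}|=p^r$ and $|C|=p^r-p^s$. Then $\hat{C}=C\cup\{1\}$. Moreover $s=0$ and $C=[y]_{\diamond}$ for some $y\in G$ such that $o(y)$ is not a prime power and $\phi(o(y))=p^r-1$.
   Context: $\phi$ is Euler's totient function and $o(g)$ the order of $g$. The power graph $\mathcal{P}(G)$ of a finite group $G$ has vertex set $G$, and distinct $x,y$ are adjacent iff $x=y^m$ or $y=x^m$ for some positive integer $m$. For $x\in G$, $N[x]$ is the closed neighbourhood of $x$ in $\mathcal{P}(G)$ (i.e. $x$ together with all vertices adjacent to $x$). Write $x\mathtt{N}y$ iff $N[x]=N[y]$; its classes are the $\mathtt{N}$-classes, $[x]_{\mathtt{N}}$ denoting the class of $x$. Write $x\diamond y$ iff $\langle x\rangle=\langle y\rangle$; $[x]_\diamond$ denotes the class of $x$. The star class $\mathcal{S}$ is $[1]_{\mathtt{N}}$, the set of vertices adjacent to all other vertices. An $\mathtt{N}$-class $C\neq\mathcal{S}$ is of the first type if it is also a $\diamond$-class. For $X\subseteq G$, $N[X]:=\bigcap_{x\in X}N[x]$ and $\hat{X}:=N[N[X]]$. *)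

theory Defs
  imports "HOL-Algebra.Algebra" "HOL-Number_Theory.Number_Theory"
begin

definition pg_adj :: "('a, 'b) monoid_scheme \<Rightarrow> 'a \<Rightarrow> 'a \<Rightarrow> bool" where
  "pg_adj G x y \<longleftrightarrow> x \<in> carrier G \<and> y \<in> carrier G \<and> x \<noteq> y \<and>
     ((\<exists>m::nat. m > 0 \<and> x = y [^]\<^bsub>G\<^esub> m) \<or> (\<exists>m::nat. m > 0 \<and> y = x [^]\<^bsub>G\<^esub> m))"

definition cnbhd :: "('a, 'b) monoid_scheme \<Rightarrow> 'a \<Rightarrow> 'a set" where
  "cnbhd G x = {y \<in> carrier G. y = x \<or> pg_adj G x y}"

definition N_class :: "('a, 'b) monoid_scheme \<Rightarrow> 'a \<Rightarrow> 'a set" where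
  "N_class G x = {y \<in> carrier G. cnbhd G y = cnbhd G x}"

definition diamond_class :: "('a, 'b) monoid_scheme \<Rightarrow> 'a \<Rightarrow> 'a set" where
  "diamond_class G x = {y \<in> carrier G. generate G {y} = generate G {x}}"

definition star_class :: "('a, 'b) monoid_scheme \<Rightarrow> 'a set" where
  "star_class G = N_class G (one G)"

definition is_N_class :: "('a, 'b) monoid_scheme \<Rightarrow> 'a set \<Rightarrow> bool" where
  "is_N_class G C \<longleftrightarrow> (\<exists>x \<in> carrier G. C = N_class G x)"

definition is_diamond_class :: "('a, 'b) monoid_scheme \<Rightarrow> 'a set \<Rightarrow> bool" where
  "is_diamond_class G C \<longleftrightarrow> (\<exists>x \<in> carrier G. C = diamond_class G x)"

definition first_type :: "('a, 'b) monoid_scheme \<Rightarrow> 'a set \<Rightarrow> bool" where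
  "first_type G C \<longleftrightarrow> is_N_class G C \<and> C \<noteq> star_class G \<and> is_diamond_class G C"

definition cnbhd_set :: "('a, 'b) monoid_scheme \<Rightarrow> 'a set \<Rightarrow> 'a set" where
  "cnbhd_set G A = {y \<in> carrier G. \<forall>x \<in> A. y \<in> cnbhd G x}"

definition hat :: "('a, 'b) monoid_scheme \<Rightarrow> 'a set \<Rightarrow> 'a set" where
  "hat G A = cnbhd_set G (cnbhd_set G A)"

end

theory Submission
  imports Defs
begin

lemma nt_primepow:
  fixes n d :: nat
  assumes n: "n > 0" and dn: "d dvd n" and d1: "d \<noteq> 1" and dne: "d \<noteq> n"
    and cmp: "\<forall>e. e dvd n \<longrightarrow> e dvd d \<or> d dvd e"
  shows "primepow n"
proof -
  obtain q where q: "Factorial_Ring.prime q" "q dvd d" using prime_factor_nat[OF d1] by blast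
  define a where "a = multiplicity q n"
  have n0: "n \<noteq> 0" and qu: "\<not> is_unit q" using n q(1) by auto
  obtain m where nm: "n = q ^ a * m" and qm: "\<not> q dvd m"
    using multiplicity_decompose'[OF n0 qu] unfolding a_def by blast
  have cop: "coprime (q ^ a) m" using prime_imp_coprime[OF q(1) qm] by simp
  have Qn: "q ^ a dvd n" and mn: "m dvd n" using nm by auto
  have dQ: "d dvd q ^ a"
  proof (rule ccontr)
    assume nd: "\<not> d dvd q ^ a"
    then have Qd: "q ^ a dvd d" using cmp Qn by blast
    show False
    proof (cases "m dvd d")
      case True
      then have "n dvd d" using divides_mult[OF Qd True cop] nm by simp
      then show False using dn dne dvd_antisym by blast
    next
      case False
      then have "d dvd m" using cmp mn by blast
      then show False using q qm dvd_trans by blast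
    qed
  qed
  have "m dvd d"
  proof (rule ccontr)
    assume "\<not> m dvd d"
    then have "d dvd m" using cmp mn by blast
    then show False using q qm dvd_trans by blast
  qed
  then have "m dvd q ^ a" using dQ dvd_trans by blast
  then have "is_unit m" using cop
    by (metis coprime_common_divisor coprime_commute dvd_refl)
  then have m1: "m = 1" by simp
  have "a > 0"
  proof (rule ccontr)
    assume "\<not> a > 0"
    then have "n = 1" using nm m1 by simp
    then show False using q dn dvd_trans by (metis nat_dvd_1_iff_1 not_prime_1)
  qed
  then show ?thesis unfolding primepow_def using q(1) nm m1 by auto
qed

lemma arith1:
  fixes p r s :: nat
  assumes "Factorial_Ring.prime p" "r \<ge> 2" "s \<le> r - 2"
  shows "p ^ r < 2 * (p ^ r - p ^ s) + 1"
proof -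
  have p2: "p \<ge> 2" using assms(1) prime_ge_2_nat by blast
  have p1: "p \<ge> 1" using p2 by simp
  have SA: "p ^ s \<le> p ^ (r - 2)" using assms(3) p1 by (simp add: power_increasing)
  have "r = 2 + (r - 2)" using assms(2) by simp
  then have PA: "p ^ r = (p * p) * p ^ (r - 2)" by (metis power_add power2_eq_square)
  have "p * p \<ge> 2 * 2" using p2 mult_le_mono by blast
  then have "p ^ r \<ge> 4 * p ^ (r - 2)" using PA mult_le_mono1 by (metis numeral_Bit0 numeral_One mult_2 one_add_one)
  then show ?thesis using SA by linarith
qed

lemma arith2:
  fixes p q r s a :: nat
  assumes p: "Factorial_Ring.prime p" and q: "Factorial_Ring.prime q" and a: "a > 0" and r: "r \<ge> 2" and s: "s \<le> r - 2"
    and eq: "q ^ a = p ^ r" and tot: "totient (q ^ a) = p ^ r - p ^ s"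
  shows False
proof -
  have "q dvd p ^ r" using eq a by (metis dvd_power gr0I)
  then have "q dvd p" using q prime_dvd_power by blast
  then have qp: "q = p" using primes_dvd_imp_eq q p by blast
  have p1: "p > 1" using p prime_gt_1_nat by blast
  have ar: "a = r" using eq qp p1 by simp
  have "totient (p ^ r) = p ^ (r - 1) * (p - 1)" using totient_prime_power[OF p] r by simp
  also have "\<dots> = p ^ r - p ^ (r - 1)"
    using r by (metis diff_mult_distrib2 nat_mult_1_right power_minus_mult less_le_trans zero_less_numeral)
  finally have "p ^ r - p ^ (r - 1) = p ^ r - p ^ s" using tot qp ar by simp
  moreover have "p ^ (r - 1) \<le> p ^ r" "p ^ s \<le> p ^ r" using p1 s by (auto intro: power_increasing)
  ultimately have "p ^ (r - 1) = p ^ s" by linarith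
  then have "r - 1 = s" using p1 by simp
  then show False using s r by linarith
qed

context group begin

lemma gen_fin: assumes "finite (carrier G)" "x \<in> carrier G"
  shows "y \<in> generate G {x} \<longleftrightarrow> (\<exists>k::nat. y = x [^] k)"
  using generate_pow_on_finite_carrier[OF assms] by blast

lemma pow_pos_rep:
  assumes "finite (carrier G)" "x \<in> carrier G"
  shows "\<exists>m::nat. m > 0 \<and> x [^] (k::nat) = x [^] m"
proof -
  have "ord x \<ge> 1" using ord_ge_1 assms by blast
  then have "0 < k + ord x" by simp
  moreover have "x [^] k = x [^] (k + ord x)"
    using assms by (simp add: nat_pow_mult[symmetric])
  ultimately show ?thesis by blast
qed

lemma cnbhd_char:
  assumes "finite (carrier G)" "x \<in> carrier G"
  shows "cnbhd G x = {y \<in> carrier G. (\<exists>k::nat. y = x [^] k) \<or> (\<exists>k::nat. x = y [^] k)}"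
proof (intro Set.set_eqI iffI)
  fix y assume y: "y \<in> cnbhd G x"
  then have yc: "y \<in> carrier G" unfolding cnbhd_def by auto
  from y have "y = x \<or> pg_adj G x y" unfolding cnbhd_def by auto
  then have "(\<exists>k::nat. y = x [^] k) \<or> (\<exists>k::nat. x = y [^] k)"
  proof
    assume "y = x" then show ?thesis using assms(2) nat_pow_eone by metis
  next
    assume "pg_adj G x y" then show ?thesis unfolding pg_adj_def by blast
  qed
  then show "y \<in> {y \<in> carrier G. (\<exists>k::nat. y = x [^] k) \<or> (\<exists>k::nat. x = y [^] k)}"
    using yc by blast
next
  fix y assume y: "y \<in> {y \<in> carrier G. (\<exists>k::nat. y = x [^] k) \<or> (\<exists>k::nat. x = y [^] k)}"
  then have yc: "y \<in> carrier G" by auto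
  show "y \<in> cnbhd G x"
  proof (cases "y = x")
    case True then show ?thesis using assms unfolding cnbhd_def by auto
  next
    case False
    from y consider k where "y = x [^] (k::nat)" | k where "x = y [^] (k::nat)" by auto
    then have "pg_adj G x y"
    proof cases
      case 1
      then obtain m :: nat where "m > 0" "y = x [^] m" using pow_pos_rep assms by metis
      then show ?thesis using False yc assms unfolding pg_adj_def by blast
    next
      case 2
      then obtain m :: nat where "m > 0" "x = y [^] m" using pow_pos_rep assms yc by metis
      then show ?thesis using False yc assms unfolding pg_adj_def by blast
    qed
    then show ?thesis using yc unfolding cnbhd_def by blast
  qed
qed


lemma cnbhd_sym:
  assumes "finite (carrier G)" "x \<in> carrier G" "y \<in> carrier G"
  shows "y \<in> cnbhd G x \<longleftrightarrow> x \<in> cnbhd G y"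
  using cnbhd_char[OF assms(1,2)] cnbhd_char[OF assms(1,3)] assms by blast

lemma one_cnbhd:
  assumes "finite (carrier G)" "x \<in> carrier G"
  shows "\<one> \<in> cnbhd G x"
  using cnbhd_char[OF assms] assms by (auto intro: exI[of _ 0])

lemma pow_trans:
  assumes "x \<in> carrier G" "y = x [^] (a::nat)" "z = y [^] (b::nat)"
  shows "z = x [^] (a * b)"
  using assms by (simp add: nat_pow_pow)

lemma diamond_char:
  assumes "finite (carrier G)" "x \<in> carrier G"
  shows "diamond_class G x = {y \<in> carrier G. (\<exists>k::nat. y = x [^] k) \<and> (\<exists>k::nat. x = y [^] k)}"
proof (intro Set.set_eqI iffI)
  fix y assume "y \<in> diamond_class G x"
  then have yc: "y \<in> carrier G" and eq: "generate G {y} = generate G {x}"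
    unfolding diamond_class_def by auto
  have "y \<in> generate G {y}" "x \<in> generate G {x}" by (auto intro: generate.incl)
  then show "y \<in> {y \<in> carrier G. (\<exists>k::nat. y = x [^] k) \<and> (\<exists>k::nat. x = y [^] k)}"
    using gen_fin[OF assms(1) yc] gen_fin[OF assms] eq yc by auto
next
  fix y assume y: "y \<in> {y \<in> carrier G. (\<exists>k::nat. y = x [^] k) \<and> (\<exists>k::nat. x = y [^] k)}"
  then have yc: "y \<in> carrier G" by auto
  have "y \<in> generate G {x}" "x \<in> generate G {y}"
    using y gen_fin[OF assms(1) yc] gen_fin[OF assms] by auto
  then have "generate G {y} \<subseteq> generate G {x}" "generate G {x} \<subseteq> generate G {y}"
    using generate_subgroup_incl generate_is_subgroup assms yc
    by (metis empty_subsetI insert_subset)+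
  then show "y \<in> diamond_class G x" unfolding diamond_class_def using yc by auto
qed

lemma diamond_cnbhd:
  assumes "finite (carrier G)" "x \<in> carrier G" "y \<in> diamond_class G x"
  shows "cnbhd G y = cnbhd G x"
proof -
  have "y \<in> {y \<in> carrier G. (\<exists>k::nat. y = x [^] k) \<and> (\<exists>k::nat. x = y [^] k)}"
    using assms(3) diamond_char[OF assms(1,2)] by simp
  then obtain a b where yc: "y \<in> carrier G" and a: "y = x [^] (a::nat)" and b: "x = y [^] (b::nat)"
    by blast
  have fwd: "(\<exists>k::nat. z = x [^] k) \<or> (\<exists>k::nat. x = z [^] k)"
    if zc: "z \<in> carrier G" and h: "(\<exists>k::nat. z = y [^] k) \<or> (\<exists>k::nat. y = z [^] k)" for z
  proof -
    from h show ?thesis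
    proof
      assume "\<exists>k::nat. z = y [^] k"
      then obtain k :: nat where "z = y [^] k" by blast
      then have "z = x [^] (a * k)" using pow_trans[OF assms(2) a] by blast
      then show ?thesis by blast
    next
      assume "\<exists>k::nat. y = z [^] k"
      then obtain k :: nat where "y = z [^] k" by blast
      then have "x = z [^] (k * b)" using pow_trans[OF zc _ b] by blast
      then show ?thesis by blast
    qed
  qed
  have bwd: "(\<exists>k::nat. z = y [^] k) \<or> (\<exists>k::nat. y = z [^] k)"
    if zc: "z \<in> carrier G" and h: "(\<exists>k::nat. z = x [^] k) \<or> (\<exists>k::nat. x = z [^] k)" for z
  proof -
    from h show ?thesis
    proof
      assume "\<exists>k::nat. z = x [^] k"
      then obtain k :: nat where "z = x [^] k" by blast
      then have "z = y [^] (b * k)" using pow_trans[OF yc b] by blast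
      then show ?thesis by blast
    next
      assume "\<exists>k::nat. x = z [^] k"
      then obtain k :: nat where "x = z [^] k" by blast
      then have "y = z [^] (k * a)" using pow_trans[OF zc _ a] by blast
      then show ?thesis by blast
    qed
  qed
  show ?thesis
    unfolding cnbhd_char[OF assms(1,2)] cnbhd_char[OF assms(1) yc]
    using fwd bwd by blast
qed

lemma ord_pow_dvd:
  assumes "x \<in> carrier G" "y = x [^] (k::nat)"
  shows "ord y dvd ord x"
proof -
  have "y [^] ord x = (x [^] ord x) [^] k" using assms by (metis nat_pow_pow mult.commute)
  then have "y [^] ord x = \<one>" using assms by simp
  then show ?thesis using assms pow_eq_id by simp
qed

lemma same_ord_diamond:
  assumes "finite (carrier G)" "x \<in> carrier G" "y = x [^] (k::nat)" "ord y = ord x"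
  shows "y \<in> diamond_class G x"
proof -
  have yc: "y \<in> carrier G" using assms by simp
  have "y \<in> generate G {x}" using gen_fin[OF assms(1,2)] assms by auto
  then have sub: "generate G {y} \<subseteq> generate G {x}"
    using generate_subgroup_incl generate_is_subgroup assms yc
    by (metis empty_subsetI insert_subset)
  have fin: "finite (generate G {x})"
    using assms(1) generate_incl assms(2) finite_subset by (metis empty_subsetI insert_subset)
  have "card (generate G {y}) = card (generate G {x})"
    using generate_pow_card assms yc by metis
  then have "generate G {y} = generate G {x}" using card_subset_eq[OF fin sub] by simp
  then show ?thesis unfolding diamond_class_def using yc by simp
qed

lemma pow_mod_ord:
  assumes "x \<in> carrier G"
  shows "x [^] (k::nat) = x [^] (k mod ord x)"
proof -
  have "x [^] k = x [^] (ord x * (k div ord x) + k mod ord x)" by simp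
  also have "\<dots> = (x [^] ord x) [^] (k div ord x) \<otimes> x [^] (k mod ord x)"
    using assms by (simp only: nat_pow_pow nat_pow_mult nat_pow_closed)
  also have "\<dots> = x [^] (k mod ord x)" using assms by simp
  finally show ?thesis .
qed

lemma card_diamond:
  assumes fin: "finite (carrier G)" and xc: "x \<in> carrier G" and o2: "ord x \<ge> 2"
  shows "card (diamond_class G x) = totient (ord x)"
proof -
  let ?n = "ord x"
  have eq: "diamond_class G x = (\<lambda>k. x [^] k) ` totatives ?n"
  proof (intro Set.set_eqI iffI)
    fix y assume y: "y \<in> diamond_class G x"
    then have "y \<in> {y \<in> carrier G. (\<exists>k::nat. y = x [^] k) \<and> (\<exists>k::nat. x = y [^] k)}"
      using diamond_char[OF fin xc] by simp
    then obtain k where yk: "y = x [^] (k::nat)" and yc: "y \<in> carrier G" by blast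
    have "generate G {y} = generate G {x}" using y unfolding diamond_class_def by auto
    then have oy: "ord y = ?n" using generate_pow_card xc yc by metis
    let ?k = "k mod ?n"
    have yk': "y = x [^] ?k" using yk pow_mod_ord[OF xc, of k] by simp
    have cop: "coprime ?k ?n" using pow_ord_eq_ord_iff[OF fin xc] yk' oy by simp
    have "?k \<noteq> 0"
    proof
      assume "?k = 0"
      then have "coprime 0 ?n" using cop by simp
      then have "?n = 1" by simp
      then show False using o2 by simp
    qed
    moreover have "?k < ?n" using o2 by simp
    ultimately have "?k \<in> totatives ?n" using cop unfolding totatives_def by auto
    then show "y \<in> (\<lambda>k. x [^] k) ` totatives ?n" using yk' by blast
  next
    fix y assume "y \<in> (\<lambda>k. x [^] k) ` totatives ?n"
    then obtain k where k: "k \<in> totatives ?n" and yk: "y = x [^] k" by blast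
    have "ord y = ?n" using pow_ord_eq_ord_iff[OF fin xc] k yk unfolding totatives_def by auto
    then show "y \<in> diamond_class G x" using same_ord_diamond[OF fin xc yk] by simp
  qed
  have "inj_on (\<lambda>k. x [^] k) (totatives ?n)"
    using ord_inj'[OF xc] by (rule inj_on_subset) (auto simp: totatives_def)
  then show ?thesis unfolding eq totient_def by (simp add: card_image)
qed


lemma gcd_pow:
  assumes "x \<in> carrier G"
  shows "\<exists>t::nat. x [^] gcd i (ord x) = (x [^] (i::nat)) [^] t"
proof (cases "i = 0")
  case True
  then have "x [^] gcd i (ord x) = \<one>" using assms by simp
  then show ?thesis using True by (intro exI[of _ 0]) simp
next
  case False
  obtain s t :: nat where st: "i * s = ord x * t + gcd i (ord x)" using bezout_nat[OF False] by blast
  have "(x [^] i) [^] s = x [^] (ord x * t + gcd i (ord x))" using assms st by (simp add: nat_pow_pow)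
  also have "\<dots> = (x [^] ord x) [^] t \<otimes> x [^] gcd i (ord x)"
    using assms by (simp only: nat_pow_pow nat_pow_mult nat_pow_closed)
  also have "\<dots> = x [^] gcd i (ord x)" using assms by simp
  finally show ?thesis by metis
qed

lemma gcd_dvd_pow:
  assumes "x \<in> carrier G" "gcd i (ord x) dvd gcd j (ord x)"
  shows "\<exists>t::nat. x [^] (j::nat) = (x [^] (i::nat)) [^] t"
proof -
  obtain s :: nat where s: "x [^] gcd i (ord x) = (x [^] i) [^] s" using gcd_pow assms(1) by blast
  obtain c where c: "gcd j (ord x) = gcd i (ord x) * c" using assms(2) unfolding dvd_def by blast
  have "j = gcd j (ord x) * (j div gcd j (ord x))" by simp
  then have "j = gcd i (ord x) * (c * (j div gcd j (ord x)))" using c by (metis mult.assoc)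
  then have "x [^] j = (x [^] gcd i (ord x)) [^] (c * (j div gcd j (ord x)))"
    using assms(1) by (metis nat_pow_pow)
  also have "\<dots> = (x [^] i) [^] (s * (c * (j div gcd j (ord x))))"
    using s assms(1) by (simp add: nat_pow_pow mult.assoc)
  finally show ?thesis by blast
qed

lemma chain_pp:
  assumes "x \<in> carrier G" "ord x = q ^ a" "Factorial_Ring.prime q"
  shows "(\<exists>t::nat. x [^] (j::nat) = (x [^] (i::nat)) [^] t) \<or> (\<exists>t::nat. x [^] i = (x [^] j) [^] t)"
proof -
  have "gcd i (ord x) dvd q ^ a" "gcd j (ord x) dvd q ^ a" using assms(2) by auto
  then obtain \<alpha> \<beta> where ab: "gcd i (ord x) = q ^ \<alpha>" "gcd j (ord x) = q ^ \<beta>"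
    using divides_primepow_nat[OF assms(3)] by metis
  show ?thesis
  proof (cases "\<alpha> \<le> \<beta>")
    case True
    then have "gcd i (ord x) dvd gcd j (ord x)" using ab by (simp add: le_imp_power_dvd)
    then show ?thesis using gcd_dvd_pow assms(1) by blast
  next
    case False
    then have "gcd j (ord x) dvd gcd i (ord x)" using ab by (simp add: le_imp_power_dvd)
    then show ?thesis using gcd_dvd_pow assms(1) by blast
  qed
qed

end

context group begin

lemma (in group) main_aux:
  fixes C :: "'a set" and p r s :: nat
  assumes "group G" and "finite (carrier G)"
    and "first_type G C"
    and "Factorial_Ring.prime p" and "r \<ge> 2" and "s \<le> r - 2"
    and "card (hat G C) = p ^ r" and "card C = p ^ r - p ^ s"
  shows "hat G C = C \<union> {one G} \<and> s = 0 \<and>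
    (\<exists>y \<in> carrier G. C = diamond_class G y \<and> \<not> primepow (group.ord G y) \<and>
        totient (group.ord G y) = p ^ r - 1)"
proof -
  note fin = assms(2)
  from assms(3) obtain x0 x where x0c: "x0 \<in> carrier G" and C0: "C = N_class G x0"
    and xc: "x \<in> carrier G" and Cx: "C = diamond_class G x" and Cns: "C \<noteq> star_class G"
    unfolding first_type_def is_N_class_def is_diamond_class_def by blast
  have xC: "x \<in> C" using Cx xc unfolding diamond_class_def by simp
  have nbx: "cnbhd G x = cnbhd G x0" using xC C0 unfolding N_class_def by simp
  have CN: "C = N_class G x" using C0 nbx unfolding N_class_def by simp
  have oneC: "\<one> \<notin> C"
  proof
    assume "\<one> \<in> C"
    then have "cnbhd G \<one> = cnbhd G x" using CN unfolding N_class_def by simp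
    then have "N_class G \<one> = N_class G x" unfolding N_class_def by simp
    then show False using Cns CN unfolding star_class_def by simp
  qed
  have x1: "x \<noteq> \<one>" using xC oneC by auto
  define n where "n = ord x"
  have n2: "n \<ge> 2" using ord_ge_1[OF fin xc] ord_eq_1[OF xc] x1 unfolding n_def by linarith
  have Cnb: "cnbhd G c = cnbhd G x" if "c \<in> C" for c using that CN unfolding N_class_def by simp
  have Csub: "C \<subseteq> carrier G" using CN unfolding N_class_def by auto
  have nbxc: "cnbhd G x \<subseteq> carrier G" unfolding cnbhd_def by auto
  have xx: "x \<in> cnbhd G x" using xc unfolding cnbhd_def by auto
  have NC: "cnbhd_set G C = cnbhd G x"
    unfolding cnbhd_set_def using Cnb xC nbxc by blast
  define T where "T = hat G C"
  have T1: "T = cnbhd_set G (cnbhd G x)" unfolding T_def hat_def NC ..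
  have Tdef: "T = {z \<in> carrier G. \<forall>w \<in> cnbhd G x. z \<in> cnbhd G w}"
    unfolding T1 cnbhd_set_def by simp
  have CT: "C \<subseteq> T"
  proof
    fix c assume c: "c \<in> C"
    have "c \<in> cnbhd G w" if "w \<in> cnbhd G x" for w
      using that Cnb[OF c] cnbhd_sym[OF fin] Csub c nbxc by blast
    then show "c \<in> T" unfolding Tdef using c Csub by blast
  qed
  have oneT: "\<one> \<in> T" unfolding Tdef using one_cnbhd[OF fin] nbxc by blast
  have Tx: "z \<in> cnbhd G x" if "z \<in> T" for z
    using that xx cnbhd_sym[OF fin] xc unfolding Tdef by blast
  have Tc: "T \<subseteq> carrier G" unfolding Tdef by blast
  have Tdiam: "y \<in> T" if zT: "z \<in> T" and yD: "y \<in> diamond_class G z" for y z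
  proof -
    have zc: "z \<in> carrier G" using zT Tc by blast
    have yc: "y \<in> carrier G" using yD unfolding diamond_class_def by blast
    have eqn: "cnbhd G y = cnbhd G z" using diamond_cnbhd[OF fin zc yD] .
    have "y \<in> cnbhd G w" if w: "w \<in> cnbhd G x" for w
    proof -
      have wc: "w \<in> carrier G" using w nbxc by blast
      have "z \<in> cnbhd G w" using zT w unfolding Tdef by blast
      then have "w \<in> cnbhd G z" using cnbhd_sym[OF fin wc zc] by blast
      then have "w \<in> cnbhd G y" using eqn by simp
      then show ?thesis using cnbhd_sym[OF fin yc wc] by blast
    qed
    then show ?thesis unfolding Tdef using yc by blast
  qed
  have finT: "finite T" using Tc fin finite_subset by blast
  have finC: "finite C" using Csub fin finite_subset by blast
  have cardC: "card C = totient n" using card_diamond[OF fin xc] n2 Cx unfolding n_def by simp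
  have hT: "card T = p ^ r" using assms(7) unfolding T_def .
  have hC: "card C = p ^ r - p ^ s" using assms(8) .
  have Cchar: "C = {y \<in> carrier G. (\<exists>k::nat. y = x [^] k) \<and> (\<exists>k::nat. x = y [^] k)}"
    using Cx diamond_char[OF fin xc] by simp

  have Tpow: "\<exists>k::nat. z = x [^] k" if zT: "z \<in> T" for z
  proof (rule ccontr)
    assume nz: "\<not> (\<exists>k::nat. z = x [^] k)"
    have zc: "z \<in> carrier G" using zT Tc by blast
    have "z \<in> {y \<in> carrier G. (\<exists>k::nat. y = x [^] k) \<or> (\<exists>k::nat. x = y [^] k)}"
      using Tx[OF zT] cnbhd_char[OF fin xc] by simp
    then obtain k :: nat where xz: "x = z [^] k" using nz by blast
    define D where "D = diamond_class G z"
    have DT: "D \<subseteq> T" using Tdiam zT unfolding D_def by blast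
    have Dchar: "D = {y \<in> carrier G. (\<exists>k::nat. y = z [^] k) \<and> (\<exists>k::nat. z = y [^] k)}"
      using diamond_char[OF fin zc] unfolding D_def by simp
    have disj: "C \<inter> D = {}"
    proof (rule ccontr)
      assume "C \<inter> D \<noteq> {}"
      then obtain y where "y \<in> C" "y \<in> D" by blast
      then obtain a b :: nat where "y = x [^] a" "z = y [^] b" using Cchar Dchar by blast
      then have "z = x [^] (a * b)" using pow_trans[OF xc] by blast
      then show False using nz by blast
    qed
    have z1: "z \<noteq> \<one>" using nz by (metis nat_pow_0)
    have oneD: "\<one> \<notin> D"
    proof
      assume "\<one> \<in> D"
      then obtain b :: nat where "z = \<one> [^] b" using Dchar by blast
      then show False using z1 by simp
    qed
    have oz2: "ord z \<ge> 2" using ord_ge_1[OF fin zc] ord_eq_1[OF zc] z1 by linarith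
    have cardD: "card D = totient (ord z)" using card_diamond[OF fin zc oz2] unfolding D_def .
    have "n dvd ord z" using ord_pow_dvd[OF zc xz] unfolding n_def .
    then have "totient n \<le> totient (ord z)" using totient_dvd_mono oz2 by simp
    then have cle: "card C \<le> card D" using cardC cardD by simp
    have finD: "finite D" using DT finT finite_subset by blast
    have "card (C \<union> D \<union> {\<one>}) = card C + card D + 1"
      using disj oneC oneD finC finD by (simp add: card_Un_disjoint)
    moreover have "card (C \<union> D \<union> {\<one>}) \<le> card T"
      using CT DT oneT finT by (intro card_mono) auto
    ultimately have "2 * card C + 1 \<le> card T" using cle by linarith
    then show False using arith1[OF assms(4,5,6)] hT hC by linarith
  qed

  have notpp: "\<not> primepow n"
  proof
    assume "primepow n"
    then obtain q a where q: "Factorial_Ring.prime q" and a: "a > 0" and nq: "n = q ^ a"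
      unfolding primepow_def by blast
    have "T = generate G {x}"
    proof (intro Set.set_eqI iffI)
      fix z assume "z \<in> T"
      then show "z \<in> generate G {x}" using Tpow gen_fin[OF fin xc] by blast
    next
      fix z assume "z \<in> generate G {x}"
      then obtain i :: nat where zi: "z = x [^] i" using gen_fin[OF fin xc] by blast
      have zc: "z \<in> carrier G" using zi xc by simp
      have "z \<in> cnbhd G w" if w: "w \<in> cnbhd G x" for w
      proof -
        have wc: "w \<in> carrier G" using w nbxc by blast
        have "w \<in> {y \<in> carrier G. (\<exists>k::nat. y = x [^] k) \<or> (\<exists>k::nat. x = y [^] k)}"
          using w cnbhd_char[OF fin xc] by simp
        then consider j :: nat where "w = x [^] j" | j :: nat where "x = w [^] j" by blast
        then have "(\<exists>k::nat. z = w [^] k) \<or> (\<exists>k::nat. w = z [^] k)"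
        proof cases
          case 1
          then show ?thesis using chain_pp[OF xc _ q, of a j i] nq zi unfolding n_def by blast
        next
          case 2
          then have "z = w [^] (j * i)" using pow_trans[OF wc _ zi] by blast
          then show ?thesis by blast
        qed
        then show ?thesis using cnbhd_char[OF fin wc] zc by blast
      qed
      then show "z \<in> T" unfolding Tdef using zc by blast
    qed
    then have "card T = n" using generate_pow_card[OF xc] unfolding n_def by simp
    then have "q ^ a = p ^ r" using hT nq by simp
    moreover have "totient (q ^ a) = p ^ r - p ^ s" using cardC hC nq by simp
    ultimately show False using arith2[OF assms(4) q a assms(5,6)] by blast
  qed

  have Tsub: "T \<subseteq> C \<union> {\<one>}"
  proof
    fix z assume zT: "z \<in> T"
    show "z \<in> C \<union> {\<one>}"
    proof (rule ccontr)
      assume zn: "z \<notin> C \<union> {\<one>}"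
      obtain k :: nat where zk: "z = x [^] k" using Tpow[OF zT] by blast
      have zc: "z \<in> carrier G" using zk xc by simp
      define d where "d = ord z"
      have dn: "d dvd n" using ord_pow_dvd[OF xc zk] unfolding d_def n_def .
      have dne: "d \<noteq> n"
      proof
        assume "d = n"
        then have "z \<in> diamond_class G x" using same_ord_diamond[OF fin xc zk] unfolding d_def n_def by simp
        then show False using zn Cx by simp
      qed
      have d1: "d \<noteq> 1" using ord_eq_1[OF zc] zn unfolding d_def by simp
      have cmp: "\<forall>e. e dvd n \<longrightarrow> e dvd d \<or> d dvd e"
      proof (intro allI impI)
        fix e assume en: "e dvd n"
        then obtain c where nc: "n = e * c" by (auto elim: dvdE)
        have e0: "e > 0" and c0: "c > 0" using nc n2 by (auto intro: gr0I)
        have cn: "c dvd n" using nc by simp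
        have ndc: "n div c = e" using nc c0 by simp
        define w where "w = x [^] c"
        have wc: "w \<in> carrier G" unfolding w_def using xc by simp
        have ow: "ord w = e" using ord_pow[OF xc, of c] cn c0 ndc unfolding w_def n_def by simp
        have "w \<in> cnbhd G x" using cnbhd_char[OF fin xc] wc unfolding w_def by blast
        then have "z \<in> cnbhd G w" using zT unfolding Tdef by blast
        then have "(\<exists>t::nat. z = w [^] t) \<or> (\<exists>t::nat. w = z [^] t)"
          using cnbhd_char[OF fin wc] by blast
        then show "e dvd d \<or> d dvd e"
        proof
          assume "\<exists>t::nat. z = w [^] t"
          then obtain t :: nat where "z = w [^] t" by blast
          then have "d dvd e" using ord_pow_dvd[OF wc] ow unfolding d_def by blast
          then show ?thesis by blast
        next
          assume "\<exists>t::nat. w = z [^] t"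
          then obtain t :: nat where "w = z [^] t" by blast
          then have "e dvd d" using ord_pow_dvd[OF zc] ow unfolding d_def by blast
          then show ?thesis by blast
        qed
      qed
      have "primepow n" using nt_primepow[OF _ dn d1 dne cmp] n2 by simp
      then show False using notpp by simp
    qed
  qed
  have Teq: "T = C \<union> {\<one>}" using Tsub CT oneT by blast
  then have "card T = card C + 1" using oneC finC by simp
  then have eq1: "p ^ r = p ^ r - p ^ s + 1" using hT hC by simp
  have p1: "p > 1" using assms(4) prime_gt_1_nat by blast
  have "p ^ s \<le> p ^ r" using p1 assms(5,6) by (intro power_increasing) auto
  then have ps1: "p ^ s = 1" using eq1 by linarith
  have s0: "s = 0"
  proof (rule ccontr)
    assume "s \<noteq> 0"
    then have "1 < p ^ s" using p1 one_less_power[of p s] by blast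
    then show False using ps1 by simp
  qed
  have tot: "totient n = p ^ r - 1" using cardC hC ps1 by simp
  show ?thesis
    using Teq s0 xc Cx notpp tot unfolding T_def n_def by blast
qed

end

theorem mainTheorem1:
  fixes G :: "('a, 'b) monoid_scheme" and C :: "'a set" and p r s :: nat
  assumes "group G" and "finite (carrier G)"
    and "first_type G C"
    and "Factorial_Ring.prime p" and "r \<ge> 2" and "s \<le> r - 2"
    and "card (hat G C) = p ^ r" and "card C = p ^ r - p ^ s"
  shows "hat G C = C \<union> {one G} \<and> s = 0 \<and>
    (\<exists>y \<in> carrier G. C = diamond_class G y \<and> \<not> primepow (group.ord G y) \<and>
        totient (group.ord G y) = p ^ r - 1)"
  using group.main_aux[OF assms(1) assms] .

end
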